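(* Let $\Phi$ be a (crystallographic) root system with affine Weyl group $\widetilde W$, let $\Lambda=\langle\Phi^\vee\rangle$ be the coroot lattice, and let $T=\mathfrak h/\Lambda$, where $\mathfrak h$ is a Cartan subalgebra of the semisimple complex Lie algebra associated to $\Phi$. For each positive root $\alpha\in\Phi^+$ let $e^\alpha:T\to\mathbb C/\mathbb Z\cong\mathbb C^*$ be the character induced by $\alpha$. Then the toric arrangement $\mathcal T_{\widetilde W}=\{H_{e^\alpha}\mid \alpha\in\Phi^+\}$, $H_{e^\alpha}=\{t\in T\mid e^\alpha(t)=1\}$, is thick.
   Context: The universal covering is $\pi:\mathfrak h\to\mathfrak h/\Lambda=T$; its real part $\pi:V_{\mathbb R}\to T_{\mathbb R}$ and the associated periodic real affine arrangement $\mathcal A_{X,\mathbb R}$ (all real hyperplanes whose complexification maps onto some $H_{e^\alpha}$; here it is the arrangement of reflection hyperplanes of $\widetilde W$) are defined as usual. A chamber of $\mathcal A_{X,\mathbb R}$ is a connected component of the complement of its hyperplanes in $V_{\mathbb R}$. Definition: a toric arrangement is thick if $\pi$ is injective on the closure of every chamber of the associated real affine arrangement $\mathcal A_{X,\mathbb R}$. *)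

theory Defs
  imports "HOL-Analysis.Analysis"
begin

text \<open>The real form V_R of the Cartan subalgebra is modelled by a Euclidean space 'a,
  identified with its dual via the inner product (invariant form).\<close>

definition reflection :: "'a::euclidean_space \<Rightarrow> 'a \<Rightarrow> 'a" where
  "reflection \<alpha> v = v - ((2 * (v \<bullet> \<alpha>)) / (\<alpha> \<bullet> \<alpha>)) *\<^sub>R \<alpha>"

definition coroot :: "'a::euclidean_space \<Rightarrow> 'a" where
  "coroot \<alpha> = (2 / (\<alpha> \<bullet> \<alpha>)) *\<^sub>R \<alpha>"

definition root_system :: "'a::euclidean_space set \<Rightarrow> bool" where
  "root_system \<Phi> \<longleftrightarrow>
     finite \<Phi> \<and> 0 \<notin> \<Phi> \<and> span \<Phi> = UNIV \<and>
     (\<forall>\<alpha>\<in>\<Phi>. \<forall>\<beta>\<in>\<Phi>. reflection \<alpha> \<beta> \<in> \<Phi>) \<and>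
     (\<forall>\<alpha>\<in>\<Phi>. \<forall>\<beta>\<in>\<Phi>. (2 * (\<beta> \<bullet> \<alpha>)) / (\<alpha> \<bullet> \<alpha>) \<in> \<int>) \<and>
     (\<forall>\<alpha>\<in>\<Phi>. \<forall>c::real. c *\<^sub>R \<alpha> \<in> \<Phi> \<longrightarrow> c = 1 \<or> c = -1)"

definition positive_system :: "'a::euclidean_space set \<Rightarrow> 'a set \<Rightarrow> bool" where
  "positive_system \<Phi> P \<longleftrightarrow>
     (\<exists>v. (\<forall>\<alpha>\<in>\<Phi>. v \<bullet> \<alpha> \<noteq> 0) \<and> P = {\<alpha>\<in>\<Phi>. v \<bullet> \<alpha> > 0})"

definition coroot_lattice :: "'a::euclidean_space set \<Rightarrow> 'a set" where
  "coroot_lattice \<Phi> =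
     {x. \<exists>c::'a \<Rightarrow> int. x = (\<Sum>\<alpha>\<in>\<Phi>. of_int (c \<alpha>) *\<^sub>R coroot \<alpha>)}"

text \<open>Real affine arrangement associated to the toric arrangement {H_{e^alpha} | alpha in P}:
  the real parts of the components of the preimages of H_{e^alpha}, i.e. the hyperplanes
  alpha(x) = k, k an integer.\<close>
definition real_affine_arrangement :: "'a::euclidean_space set \<Rightarrow> 'a set set" where
  "real_affine_arrangement P = {{x. \<alpha> \<bullet> x = of_int k} | \<alpha> k. \<alpha> \<in> P}"

definition chambers :: "'a::euclidean_space set set \<Rightarrow> 'a set set" where
  "chambers \<A> = components (UNIV - \<Union>\<A>)"

text \<open>Thickness: the projection V_R \<rightarrow> V_R / \<Lambda> is injective on the closure of every chamber.\<close>
definition thick :: "'a::euclidean_space set \<Rightarrow> 'a set \<Rightarrow> bool" where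
  "thick \<Lambda> P \<longleftrightarrow>
     (\<forall>C\<in>chambers (real_affine_arrangement P).
        \<forall>x\<in>closure C. \<forall>y\<in>closure C. x - y \<in> \<Lambda> \<longrightarrow> x = y)"

end

theory Submission
  imports Defs
begin

lemma inner_sum_list_right:
  "(x::'a::euclidean_space) \<bullet> sum_list (map f xs) = sum_list (map (\<lambda>b. x \<bullet> f b) xs)"
  by (induction xs) (simp_all add: inner_add_right)

lemma inner_sum_list_left:
  "sum_list (map f xs) \<bullet> (x::'a::euclidean_space) = sum_list (map (\<lambda>b. f b \<bullet> x) xs)"
  by (induction xs) (simp_all add: inner_add_left)

lemma sum_list_pos_ex:
  fixes g :: "'b \<Rightarrow> real"
  assumes "sum_list (map g xs) > 0" shows "\<exists>x\<in>set xs. g x > 0"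
proof (rule ccontr)
  assume "\<not> ?thesis"
  then have "sum_list (map g xs) \<le> 0" by (intro sum_list_nonpos) auto
  with assms show False by simp
qed

lemma sum_list_Ints:
  fixes g :: "'b \<Rightarrow> real"
  shows "(\<forall>x\<in>set xs. g x \<in> \<int>) \<Longrightarrow> sum_list (map g xs) \<in> \<int>"
  by (induction xs) auto

lemma reflection_adj:
  "reflection b x \<bullet> y = x \<bullet> reflection (b::'a::euclidean_space) y"
  unfolding reflection_def
  by (simp add: inner_diff_left inner_diff_right algebra_simps inner_commute)

lemma coroot_inner_self:
  assumes "(b::'a::euclidean_space) \<noteq> 0" shows "coroot b \<bullet> b = 2"
  using assms by (simp add: coroot_def)

lemma key:
  assumes rs: "root_system \<Phi>"
  shows "set bs \<subseteq> \<Phi> \<Longrightarrow> (\<forall>\<alpha>\<in>\<Phi>. \<bar>\<alpha> \<bullet> sum_list (map coroot bs)\<bar> \<le> 1)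
          \<Longrightarrow> sum_list (map coroot bs) = (0::'a::euclidean_space)"
proof (induction "length bs" arbitrary: bs rule: less_induct)
  case less
  define l where "l = sum_list (map coroot bs)"
  from rs have z: "0 \<notin> \<Phi>" and refl: "\<forall>\<alpha>\<in>\<Phi>. \<forall>\<beta>\<in>\<Phi>. reflection \<alpha> \<beta> \<in> \<Phi>"
    and int: "\<forall>\<alpha>\<in>\<Phi>. \<forall>\<beta>\<in>\<Phi>. (2 * (\<beta> \<bullet> \<alpha>)) / (\<alpha> \<bullet> \<alpha>) \<in> \<int>"
    unfolding root_system_def by auto
  show ?case
  proof (rule ccontr)
    assume ne: "sum_list (map coroot bs) \<noteq> 0"
    then have "0 < l \<bullet> l" using l_def by simp
    also have "l \<bullet> l = sum_list (map (\<lambda>b. l \<bullet> coroot b) bs)"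
      unfolding l_def[symmetric] by (subst (2) l_def) (rule inner_sum_list_right)
    finally obtain b where b: "b \<in> set bs" "l \<bullet> coroot b > 0"
      using sum_list_pos_ex by blast
    have bP: "b \<in> \<Phi>" using b less.prems(1) by auto
    have b0: "b \<noteq> 0" using bP z by auto
    have bb: "b \<bullet> b > 0" using b0 by simp
    have eq: "l \<bullet> coroot b = (2 / (b \<bullet> b)) * (l \<bullet> b)" by (simp add: coroot_def)
    have c: "2 / (b \<bullet> b) > 0" using bb by simp
    have pos: "l \<bullet> b > 0"
    proof -
      have "0 < (2 / (b \<bullet> b)) * (l \<bullet> b)" using b(2) eq by argo
      then show ?thesis using c by (meson zero_less_mult_pos)
    qed
    have "l \<bullet> b = sum_list (map (\<lambda>c. coroot c \<bullet> b) bs)"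
      unfolding l_def by (rule inner_sum_list_left)
    moreover have "\<forall>c\<in>set bs. coroot c \<bullet> b \<in> \<int>"
    proof
      fix c assume "c \<in> set bs"
      then have "c \<in> \<Phi>" using less.prems(1) by auto
      then have "(2 * (b \<bullet> c)) / (c \<bullet> c) \<in> \<int>" using int bP by blast
      moreover have "coroot c \<bullet> b = (2 * (b \<bullet> c)) / (c \<bullet> c)"
        by (simp add: coroot_def inner_commute)
      ultimately show "coroot c \<bullet> b \<in> \<int>" by simp
    qed
    ultimately have lint: "l \<bullet> b \<in> \<int>" using sum_list_Ints by metis
    have "\<bar>b \<bullet> l\<bar> \<le> 1" using less.prems(2) bP l_def by blast
    then have le1: "l \<bullet> b \<le> 1" by (simp add: inner_commute)
    from lint obtain n where n: "l \<bullet> b = of_int n" by (auto elim: Ints_cases)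
    with pos le1 have "n = 1" by simp
    with n have one: "l \<bullet> b = 1" by simp
    have reflb: "reflection b l = l - coroot b"
      unfolding reflection_def coroot_def using one by (simp add: inner_commute)
    define l' where "l' = sum_list (map coroot (remove1 b bs))"
    have decomp: "l = coroot b + l'" unfolding l_def l'_def
      by (rule sum_list_map_remove1[OF b(1)])
    have len: "length (remove1 b bs) < length bs"
    proof -
      have "0 < length bs" using b(1) by (cases bs) auto
      then show ?thesis using b(1) by (simp add: length_remove1)
    qed
    have sub: "set (remove1 b bs) \<subseteq> \<Phi>" by (rule subset_trans[OF set_remove1_subset less.prems(1)])
    have P': "\<forall>\<alpha>\<in>\<Phi>. \<bar>\<alpha> \<bullet> l'\<bar> \<le> 1"
    proof
      fix \<alpha> assume a: "\<alpha> \<in> \<Phi>"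
      have "\<alpha> \<bullet> l' = \<alpha> \<bullet> reflection b l" using reflb decomp by simp
      also have "\<dots> = reflection b \<alpha> \<bullet> l" by (rule reflection_adj[symmetric])
      finally have "\<alpha> \<bullet> l' = reflection b \<alpha> \<bullet> l" .
      moreover have "reflection b \<alpha> \<in> \<Phi>" using refl bP a by blast
      ultimately show "\<bar>\<alpha> \<bullet> l'\<bar> \<le> 1" using less.prems(2) l_def by auto
    qed
    have "l' = 0" using less.hyps[OF len sub] P' l'_def by simp
    then have "l = coroot b" using decomp by simp
    then have "l \<bullet> b = 2" using coroot_inner_self[OF b0] by simp
    with one show False by simp
  qed
qed

lemma sum_replicate_coroot:
  "sum_list (map coroot (replicate m \<beta>)) = real m *\<^sub>R coroot (\<beta>::'a::euclidean_space)"
  by (induction m) (simp_all add: algebra_simps)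

lemma lattice_list:
  assumes rs: "root_system \<Phi>" and x: "x \<in> coroot_lattice \<Phi>"
  shows "\<exists>bs. set bs \<subseteq> \<Phi> \<and> x = sum_list (map coroot bs)"
proof -
  define R where "R = {sum_list (map coroot bs) | bs. set bs \<subseteq> \<Phi>}"
  from rs have fin: "finite \<Phi>" and z: "0 \<notin> \<Phi>"
    and refl: "\<forall>\<alpha>\<in>\<Phi>. \<forall>\<beta>\<in>\<Phi>. reflection \<alpha> \<beta> \<in> \<Phi>"
    unfolding root_system_def by auto
  have neg: "-\<beta> \<in> \<Phi>" if "\<beta> \<in> \<Phi>" for \<beta>
  proof -
    have "\<beta> \<noteq> 0" using that z by auto
    then have "reflection \<beta> \<beta> = -\<beta>" by (simp add: reflection_def algebra_simps scaleR_2)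
    then show ?thesis using refl that by metis
  qed
  have sc: "of_int n *\<^sub>R coroot \<beta> \<in> R" if "\<beta> \<in> \<Phi>" for \<beta> n
  proof (cases "n \<ge> 0")
    case True
    have "of_int n *\<^sub>R coroot \<beta> = sum_list (map coroot (replicate (nat n) \<beta>))"
      unfolding sum_replicate_coroot using True by simp
    then show ?thesis unfolding R_def using that by fastforce
  next
    case False
    have "of_int n *\<^sub>R coroot \<beta> = sum_list (map coroot (replicate (nat (-n)) (-\<beta>)))"
      unfolding sum_replicate_coroot using False by (simp add: coroot_def)
    then show ?thesis unfolding R_def using neg[OF that] by fastforce
  qed
  have add: "a + b \<in> R" if "a \<in> R" "b \<in> R" for a b
  proof -
    from that obtain as bs where "set as \<subseteq> \<Phi>" "set bs \<subseteq> \<Phi>"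
      "a = sum_list (map coroot as)" "b = sum_list (map coroot bs)" unfolding R_def by blast
    then show ?thesis unfolding R_def by (intro CollectI exI[of _ "as @ bs"]) auto
  qed
  have zR: "0 \<in> R" unfolding R_def by (intro CollectI exI[of _ "[]"]) auto
  have "\<forall>F. finite F \<longrightarrow> F \<subseteq> \<Phi> \<longrightarrow> (\<Sum>\<alpha>\<in>F. of_int (c \<alpha>) *\<^sub>R coroot \<alpha>) \<in> R" for c :: "'a \<Rightarrow> int"
  proof (intro allI impI)
    fix F :: "'a set" assume "finite F" "F \<subseteq> \<Phi>"
    then show "(\<Sum>\<alpha>\<in>F. of_int (c \<alpha>) *\<^sub>R coroot \<alpha>) \<in> R"
    proof (induction F rule: finite_induct)
      case empty then show ?case using zR by simp
    next
      case (insert a F)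
      then have "of_int (c a) *\<^sub>R coroot a \<in> R" "(\<Sum>\<alpha>\<in>F. of_int (c \<alpha>) *\<^sub>R coroot \<alpha>) \<in> R"
        using sc by auto
      then show ?case using insert(1,2) add by simp
    qed
  qed
  note allF = this
  from x obtain c :: "'a \<Rightarrow> int" where "x = (\<Sum>\<alpha>\<in>\<Phi>. of_int (c \<alpha>) *\<^sub>R coroot \<alpha>)"
    unfolding coroot_lattice_def by blast
  then have "x \<in> R" using allF[of c] fin by simp
  then show ?thesis unfolding R_def by blast
qed

theorem mainTheorem4:
  fixes \<Phi> P :: "'a::euclidean_space set"
  assumes "root_system \<Phi>"
    and "positive_system \<Phi> P"
  shows "thick (coroot_lattice \<Phi>) P"
  unfolding thick_def
proof (intro ballI impI)
  fix C x y
  assume C: "C \<in> chambers (real_affine_arrangement P)" and x: "x \<in> closure C"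
    and y: "y \<in> closure C" and xy: "x - y \<in> coroot_lattice \<Phi>"
  from assms(2) obtain v where v: "\<forall>\<alpha>\<in>\<Phi>. v \<bullet> \<alpha> \<noteq> 0" "P = {\<alpha>\<in>\<Phi>. v \<bullet> \<alpha> > 0}"
    unfolding positive_system_def by blast
  from assms(1) have z: "0 \<notin> \<Phi>" and refl: "\<forall>\<alpha>\<in>\<Phi>. \<forall>\<beta>\<in>\<Phi>. reflection \<alpha> \<beta> \<in> \<Phi>"
    unfolding root_system_def by auto
  have Cc: "connected C" "C \<noteq> {}" "C \<subseteq> UNIV - \<Union>(real_affine_arrangement P)"
    using C unfolding chambers_def
    by (auto dest: in_components_connected in_components_nonempty in_components_subset)
  have strip: "\<exists>k::int. closure C \<subseteq> {z. \<alpha> \<bullet> z \<ge> of_int k} \<inter> {z. \<alpha> \<bullet> z \<le> of_int k + 1}"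
    if aP: "\<alpha> \<in> P" for \<alpha>
  proof -
    have noint: "\<alpha> \<bullet> z \<noteq> of_int j" if "z \<in> C" for z j
    proof
      assume "\<alpha> \<bullet> z = of_int j"
      then have "z \<in> {x. \<alpha> \<bullet> x = of_int j}" by simp
      moreover have "{x. \<alpha> \<bullet> x = of_int j} \<in> real_affine_arrangement P"
        unfolding real_affine_arrangement_def using aP by blast
      ultimately show False using Cc(3) that by blast
    qed
    obtain z0 where z0: "z0 \<in> C" using Cc(2) by blast
    define k where "k = \<lfloor>\<alpha> \<bullet> z0\<rfloor>"
    have k1: "of_int k < \<alpha> \<bullet> z0"
      using noint[OF z0, of k] of_int_floor_le[of "\<alpha> \<bullet> z0"] k_def by linarith
    have k2: "\<alpha> \<bullet> z0 < of_int k + 1" using k_def by linarith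
    have "C \<subseteq> {z. \<alpha> \<bullet> z \<ge> of_int k} \<inter> {z. \<alpha> \<bullet> z \<le> of_int k + 1}"
    proof
      fix z assume zC: "z \<in> C"
      have "\<alpha> \<bullet> z > of_int k"
      proof (rule ccontr)
        assume "\<not> ?thesis"
        then have "z \<bullet> \<alpha> \<le> of_int k" "of_int k \<le> z0 \<bullet> \<alpha>" using k1 by (auto simp: inner_commute)
        then obtain w where "w \<in> C" "w \<bullet> \<alpha> = of_int k"
          using connected_ivt_component[OF Cc(1) zC z0] by blast
        then show False using noint by (metis inner_commute)
      qed
      moreover have "\<alpha> \<bullet> z < of_int k + 1"
      proof (rule ccontr)
        assume "\<not> ?thesis"
        then have "z0 \<bullet> \<alpha> \<le> of_int (k+1)" "of_int (k+1) \<le> z \<bullet> \<alpha>" using k2 by (auto simp: inner_commute)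
        then obtain w where "w \<in> C" "w \<bullet> \<alpha> = of_int (k+1)"
          using connected_ivt_component[OF Cc(1) z0 zC] by blast
        then show False using noint by (metis inner_commute)
      qed
      ultimately show "z \<in> {z. \<alpha> \<bullet> z \<ge> of_int k} \<inter> {z. \<alpha> \<bullet> z \<le> of_int k + 1}" by simp
    qed
    then have "closure C \<subseteq> {z. \<alpha> \<bullet> z \<ge> of_int k} \<inter> {z. \<alpha> \<bullet> z \<le> of_int k + 1}"
      by (intro closure_minimal) (auto intro: closed_Int closed_halfspace_ge closed_halfspace_le)
    then show ?thesis by blast
  qed
  have bndP: "\<bar>\<alpha> \<bullet> (x - y)\<bar> \<le> 1" if aP: "\<alpha> \<in> P" for \<alpha>
  proof -
    obtain k :: int where "closure C \<subseteq> {z. \<alpha> \<bullet> z \<ge> of_int k} \<inter> {z. \<alpha> \<bullet> z \<le> of_int k + 1}"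
      using strip[OF aP] by blast
    with x y have "of_int k \<le> \<alpha> \<bullet> x" "\<alpha> \<bullet> x \<le> of_int k + 1"
      "of_int k \<le> \<alpha> \<bullet> y" "\<alpha> \<bullet> y \<le> of_int k + 1" by auto
    then show ?thesis by (simp add: inner_diff_right)
  qed
  have bnd: "\<forall>\<alpha>\<in>\<Phi>. \<bar>\<alpha> \<bullet> (x - y)\<bar> \<le> 1"
  proof
    fix \<alpha> assume a: "\<alpha> \<in> \<Phi>"
    show "\<bar>\<alpha> \<bullet> (x - y)\<bar> \<le> 1"
    proof (cases "v \<bullet> \<alpha> > 0")
      case True
      then show ?thesis using bndP v(2) a by auto
    next
      case False
      have "\<alpha> \<noteq> 0" using a z by auto
      then have "reflection \<alpha> \<alpha> = -\<alpha>" by (simp add: reflection_def algebra_simps scaleR_2)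
      then have "-\<alpha> \<in> \<Phi>" using refl a by metis
      moreover have "v \<bullet> (-\<alpha>) > 0"
      proof -
        have "v \<bullet> \<alpha> \<noteq> 0" using v(1) a by blast
        then have "v \<bullet> \<alpha> < 0" using False by linarith
        then show ?thesis by simp
      qed
      ultimately have "-\<alpha> \<in> P" using v(2) by auto
      then show ?thesis using bndP[of "-\<alpha>"] by simp
    qed
  qed
  obtain bs where bs: "set bs \<subseteq> \<Phi>" "x - y = sum_list (map coroot bs)"
    using lattice_list[OF assms(1) xy] by blast
  have "x - y = 0" using key[OF assms(1) bs(1)] bnd bs(2) by simp
  then show "x = y" by simp
qed

end
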